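(* Let $(G=(V,E),\sigma)$ be a properly $n$-colored graph containing a hub-vertex $x$. If $F$ is an optimal RBMG deletion set (resp. optimal RBMG edit set) for $(G,\sigma)$, then $F$ contains no pair of the form $xv$ with $v\in V$.
   Context: All graphs are finite, simple and undirected; $G\setminus F=(V,E\setminus F)$, $G\triangle F=(V,E\triangle F)$. A vertex coloring is a surjective map $\sigma:V\to S$; properly $n$-colored means adjacent vertices get distinct colors and $|S|=n$. A hub-vertex of $G$ is a vertex adjacent to all other vertices. A phylogenetic tree $T$ on $L$ is a rooted tree with leaf set $L$ whose inner vertices other than the root have degree at least three; $u\preceq_T v$ means $v$ lies on the root-to-$u$ path; $\mathrm{lca}_T$ is last common ancestor. For surjective $\sigma:L\to S$, $y$ is a best match of $x$ if $\sigma(x)\neq\sigma(y)$ and $\mathrm{lca}_T(x,y)\preceq_T\mathrm{lca}_T(x,y')$ for all $y'$ with $\sigma(y')=\sigma(y)$; $G(T,\sigma)$ is the graph on $L$ whose edges are the reciprocal best match pairs. A properly colored $(G,\sigma)$ is an RBMG if $G(T,\sigma)=(G,\sigma)$ for some $(T,\sigma)$; an $n$-RBMG if exactly $n$ colors are used. For a properly $n$-colored $(G,\sigma)$, $F\subseteq E$ is an (RBMG) deletion set if $(G\setminus F,\sigma)$ is an $n$-RBMG, and $F\subseteq\binom{V}{2}$ is an edit set if $(G\triangle F,\sigma)$ is an $n$-RBMG; such a set is optimal if it has minimum cardinality among all deletion (resp. edit) sets. *)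

theory Defs
  imports Main
begin

definition all_pairs :: "'a set \<Rightarrow> 'a set set" where
  "all_pairs V = {e. \<exists>u v. e = {u, v} \<and> u \<noteq> v \<and> u \<in> V \<and> v \<in> V}"

definition simple_graph :: "'a set \<Rightarrow> 'a set set \<Rightarrow> bool" where
  "simple_graph V E \<longleftrightarrow> finite V \<and> E \<subseteq> all_pairs V"

text \<open>sigma restricted to V is a surjective map onto its image sigma ` V (the color set S).\<close>
definition properly_colored :: "'a set \<Rightarrow> 'a set set \<Rightarrow> ('a \<Rightarrow> 'c) \<Rightarrow> bool" where
  "properly_colored V E \<sigma> \<longleftrightarrow> (\<forall>u v. {u, v} \<in> E \<longrightarrow> \<sigma> u \<noteq> \<sigma> v)"

definition properly_n_colored :: "'a set \<Rightarrow> 'a set set \<Rightarrow> ('a \<Rightarrow> 'c) \<Rightarrow> nat \<Rightarrow> bool" where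
  "properly_n_colored V E \<sigma> n \<longleftrightarrow> simple_graph V E \<and> properly_colored V E \<sigma> \<and> card (\<sigma> ` V) = n"

definition hub_vertex :: "'a set \<Rightarrow> 'a set set \<Rightarrow> 'a \<Rightarrow> bool" where
  "hub_vertex V E x \<longleftrightarrow> x \<in> V \<and> (\<forall>v \<in> V - {x}. {x, v} \<in> E)"

text \<open>A finite rooted tree is given by its vertex set W and its ancestor order
  (le u v means u \<preceq>_T v, i.e. v lies on the path from the root to u).\<close>

definition tree_root :: "'b set \<Rightarrow> ('b \<Rightarrow> 'b \<Rightarrow> bool) \<Rightarrow> 'b" where
  "tree_root W le = (THE r. r \<in> W \<and> (\<forall>u \<in> W. le u r))"

definition tree_children :: "'b set \<Rightarrow> ('b \<Rightarrow> 'b \<Rightarrow> bool) \<Rightarrow> 'b \<Rightarrow> 'b set" where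
  "tree_children W le v = {u \<in> W. u \<noteq> v \<and> le u v \<and> (\<forall>w \<in> W. le u w \<and> le w v \<longrightarrow> w = u \<or> w = v)}"

definition rooted_tree :: "'b set \<Rightarrow> ('b \<Rightarrow> 'b \<Rightarrow> bool) \<Rightarrow> bool" where
  "rooted_tree W le \<longleftrightarrow> finite W \<and>
     (\<forall>u \<in> W. le u u) \<and>
     (\<forall>u \<in> W. \<forall>v \<in> W. le u v \<and> le v u \<longrightarrow> u = v) \<and>
     (\<forall>u \<in> W. \<forall>v \<in> W. \<forall>w \<in> W. le u v \<and> le v w \<longrightarrow> le u w) \<and>
     (\<forall>u v. le u v \<longrightarrow> u \<in> W \<and> v \<in> W) \<and>
     (\<exists>r \<in> W. \<forall>u \<in> W. le u r) \<and>
     (\<forall>u \<in> W. \<forall>v \<in> W. \<forall>w \<in> W. le u v \<and> le u w \<longrightarrow> le v w \<or> le w v)"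

definition tree_leaves :: "'b set \<Rightarrow> ('b \<Rightarrow> 'b \<Rightarrow> bool) \<Rightarrow> 'b set" where
  "tree_leaves W le = {u \<in> W. \<forall>w \<in> W. le w u \<longrightarrow> w = u}"

text \<open>Phylogenetic tree on leaf set L: inner vertices other than the root have degree
  at least three, i.e. at least two children (plus their parent).\<close>
definition phylo_tree :: "'b set \<Rightarrow> 'b set \<Rightarrow> ('b \<Rightarrow> 'b \<Rightarrow> bool) \<Rightarrow> bool" where
  "phylo_tree L W le \<longleftrightarrow> rooted_tree W le \<and> tree_leaves W le = L \<and>
     (\<forall>v \<in> W - L. v \<noteq> tree_root W le \<longrightarrow> card (tree_children W le v) \<ge> 2)"

definition lca :: "'b set \<Rightarrow> ('b \<Rightarrow> 'b \<Rightarrow> bool) \<Rightarrow> 'b \<Rightarrow> 'b \<Rightarrow> 'b" where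
  "lca W le x y = (THE z. z \<in> W \<and> le x z \<and> le y z \<and> (\<forall>w \<in> W. le x w \<and> le y w \<longrightarrow> le z w))"

definition best_match :: "'b set \<Rightarrow> 'b set \<Rightarrow> ('b \<Rightarrow> 'b \<Rightarrow> bool) \<Rightarrow> ('b \<Rightarrow> 'c) \<Rightarrow> 'b \<Rightarrow> 'b \<Rightarrow> bool" where
  "best_match L W le \<sigma> x y \<longleftrightarrow> x \<in> L \<and> y \<in> L \<and> \<sigma> x \<noteq> \<sigma> y \<and>
     (\<forall>y' \<in> L. \<sigma> y' = \<sigma> y \<longrightarrow> le (lca W le x y) (lca W le x y'))"

definition rbm_edges :: "'b set \<Rightarrow> 'b set \<Rightarrow> ('b \<Rightarrow> 'b \<Rightarrow> bool) \<Rightarrow> ('b \<Rightarrow> 'c) \<Rightarrow> 'b set set" where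
  "rbm_edges L W le \<sigma> = {{x, y} | x y. best_match L W le \<sigma> x y \<and> best_match L W le \<sigma> y x}"

text \<open>Trees are finite; w.l.o.g. their vertex type is 'a + nat (leaves Inl v, inner vertices Inr k).\<close>
definition is_RBMG :: "'a set \<Rightarrow> 'a set set \<Rightarrow> ('a \<Rightarrow> 'c) \<Rightarrow> bool" where
  "is_RBMG V E \<sigma> \<longleftrightarrow> simple_graph V E \<and> properly_colored V E \<sigma> \<and>
     (\<exists>(W :: ('a + nat) set) le. phylo_tree (Inl ` V) W le \<and>
        rbm_edges (Inl ` V) W le (\<sigma> \<circ> projl) = (\<lambda>e. Inl ` e) ` E)"

definition is_n_RBMG :: "'a set \<Rightarrow> 'a set set \<Rightarrow> ('a \<Rightarrow> 'c) \<Rightarrow> nat \<Rightarrow> bool" where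
  "is_n_RBMG V E \<sigma> n \<longleftrightarrow> is_RBMG V E \<sigma> \<and> card (\<sigma> ` V) = n"

definition deletion_set :: "'a set \<Rightarrow> 'a set set \<Rightarrow> ('a \<Rightarrow> 'c) \<Rightarrow> nat \<Rightarrow> 'a set set \<Rightarrow> bool" where
  "deletion_set V E \<sigma> n F \<longleftrightarrow> F \<subseteq> E \<and> is_n_RBMG V (E - F) \<sigma> n"

definition edit_set :: "'a set \<Rightarrow> 'a set set \<Rightarrow> ('a \<Rightarrow> 'c) \<Rightarrow> nat \<Rightarrow> 'a set set \<Rightarrow> bool" where
  "edit_set V E \<sigma> n F \<longleftrightarrow> F \<subseteq> all_pairs V \<and> is_n_RBMG V ((E - F) \<union> (F - E)) \<sigma> n"

definition optimal_deletion_set :: "'a set \<Rightarrow> 'a set set \<Rightarrow> ('a \<Rightarrow> 'c) \<Rightarrow> nat \<Rightarrow> 'a set set \<Rightarrow> bool" where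
  "optimal_deletion_set V E \<sigma> n F \<longleftrightarrow> deletion_set V E \<sigma> n F \<and>
     (\<forall>F'. deletion_set V E \<sigma> n F' \<longrightarrow> card F \<le> card F')"

definition optimal_edit_set :: "'a set \<Rightarrow> 'a set set \<Rightarrow> ('a \<Rightarrow> 'c) \<Rightarrow> nat \<Rightarrow> 'a set set \<Rightarrow> bool" where
  "optimal_edit_set V E \<sigma> n F \<longleftrightarrow> edit_set V E \<sigma> n F \<and>
     (\<forall>F'. edit_set V E \<sigma> n F' \<longrightarrow> card F \<le> card F')"

end

theory Submission
  imports Defs
begin


lemma two_elems: "finite A \<Longrightarrow> card A \<ge> 2 \<Longrightarrow> \<exists>a b. a \<in> A \<and> b \<in> A \<and> a \<noteq> b"
proof (rule ccontr)
  assume f: "finite A" and c: "card A \<ge> 2" and n: "\<not> (\<exists>a b. a \<in> A \<and> b \<in> A \<and> a \<noteq> b)"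
  then have "A = {} \<or> (\<exists>a. A = {a})" by blast
  then show False using c by auto
qed

lemma card2_eq: "finite A \<Longrightarrow> card A = 2 \<Longrightarrow> a \<in> A \<Longrightarrow> b \<in> A \<Longrightarrow> a \<noteq> b \<Longrightarrow> A = {a, b}"
  by (metis card_2_iff doubleton_eq_iff insertE singletonD)

locale rtree =
  fixes W :: "'b set" and le :: "'b \<Rightarrow> 'b \<Rightarrow> bool"
  assumes rt: "rooted_tree W le"
begin

lemma fin: "finite W" using rt unfolding rooted_tree_def by blast
lemma dom: "le u v \<Longrightarrow> u \<in> W \<and> v \<in> W" using rt unfolding rooted_tree_def by blast
lemma t_refl: "u \<in> W \<Longrightarrow> le u u" using rt unfolding rooted_tree_def by blast
lemma t_antisym: "le u v \<Longrightarrow> le v u \<Longrightarrow> u = v"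
proof -
  assume a: "le u v" "le v u"
  from rt have A: "\<forall>u\<in>W. \<forall>v\<in>W. le u v \<and> le v u \<longrightarrow> u = v" unfolding rooted_tree_def by blast
  show "u = v" using A dom[OF a(1)] a by metis
qed
lemma t_trans: "le u v \<Longrightarrow> le v w \<Longrightarrow> le u w"
proof -
  assume a: "le u v" "le v w"
  from rt have A: "\<forall>u\<in>W. \<forall>v\<in>W. \<forall>w\<in>W. le u v \<and> le v w \<longrightarrow> le u w" unfolding rooted_tree_def by blast
  show ?thesis using A dom[OF a(1)] dom[OF a(2)] a by blast
qed
lemma chain: "le u v \<Longrightarrow> le u w \<Longrightarrow> le v w \<or> le w v"
proof -
  assume a: "le u v" "le u w"
  from rt have A: "\<forall>u\<in>W. \<forall>v\<in>W. \<forall>w\<in>W. le u v \<and> le u w \<longrightarrow> le v w \<or> le w v" unfolding rooted_tree_def by blast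
  show ?thesis using A dom[OF a(1)] dom[OF a(2)] a by blast
qed
lemma root_ex: "\<exists>r\<in>W. \<forall>u\<in>W. le u r" using rt unfolding rooted_tree_def by blast
lemma root_eq: "r \<in> W \<Longrightarrow> \<forall>u\<in>W. le u r \<Longrightarrow> tree_root W le = r"
  unfolding tree_root_def by (rule the_equality) (auto intro: t_antisym)

lemma min_anc:
  assumes "S \<subseteq> {w. le a w}" "s \<in> S"
  shows "\<exists>z\<in>S. \<forall>w\<in>S. le z w"
proof -
  define m where "m w = card {u. le u w}" for w
  from ex_has_least_nat[of "\<lambda>w. w \<in> S" s m] assms(2)
  obtain z where z: "z\<in>S" "\<forall>y. y\<in>S \<longrightarrow> m z \<le> m y" by blast
  have "\<forall>w\<in>S. le z w"
  proof
    fix w assume w: "w \<in> S"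
    have "le a z" "le a w" using z w assms by auto
    hence "le z w \<or> le w z" by (rule chain)
    thus "le z w"
    proof
      assume wz: "le w z"
      show "le z w"
      proof (rule ccontr)
        assume nz: "\<not> le z w"
        have zW: "z \<in> W" using wz dom by blast
        have sub: "{u. le u w} \<subset> {u. le u z}"
          using nz wz t_trans t_refl[OF zW] by blast
        have "finite {u. le u z}" using dom fin by (metis (no_types, lifting) finite_subset mem_Collect_eq subsetI)
        hence "m w < m z" unfolding m_def using sub psubset_card_mono by blast
        with z w show False by force
      qed
    qed
  qed
  with z show ?thesis by blast
qed

lemma max_anc:
  assumes "S \<subseteq> {w. le a w}" "s \<in> S"
  shows "\<exists>z\<in>S. \<forall>w\<in>S. le w z"
proof -
  define m where "m w = card {u. le w u}" for w
  from ex_has_least_nat[of "\<lambda>w. w \<in> S" s m] assms(2)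
  obtain z where z: "z\<in>S" "\<forall>y. y\<in>S \<longrightarrow> m z \<le> m y" by blast
  have "\<forall>w\<in>S. le w z"
  proof
    fix w assume w: "w \<in> S"
    have "le a z" "le a w" using z w assms by auto
    hence "le z w \<or> le w z" by (rule chain)
    thus "le w z"
    proof
      assume wz: "le z w"
      show "le w z"
      proof (rule ccontr)
        assume nz: "\<not> le w z"
        have zW: "z \<in> W" using wz dom by blast
        have sub: "{u. le w u} \<subset> {u. le z u}"
          using nz wz t_trans t_refl[OF zW] by blast
        have "finite {u. le z u}" using dom fin by (metis (no_types, lifting) finite_subset mem_Collect_eq subsetI)
        hence "m w < m z" unfolding m_def using sub psubset_card_mono by blast
        with z w show False by force
      qed
    qed
  qed
  with z show ?thesis by blast
qed

lemma child_above:
  assumes "le a v" "a \<noteq> v"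
  shows "\<exists>c \<in> tree_children W le v. le a c"
proof -
  let ?S = "{w. le a w \<and> le w v \<and> w \<noteq> v}"
  have "a \<in> ?S" using assms dom t_refl by blast
  from max_anc[of ?S a a, OF _ this] obtain z where z: "z \<in> ?S" "\<forall>w\<in>?S. le w z" by blast
  have zS: "le a z" "le z v" "z \<noteq> v" using z(1) by auto
  have "\<forall>w\<in>W. le z w \<and> le w v \<longrightarrow> w = z \<or> w = v"
  proof (intro ballI impI)
    fix w assume w: "w \<in> W" "le z w \<and> le w v"
    show "w = z \<or> w = v"
    proof (cases "w = v")
      case False
      have "le a w" using t_trans zS(1) w(2) by blast
      hence "w \<in> ?S" using False w by blast
      hence "le w z" using z(2) by blast
      thus ?thesis using t_antisym w(2) by blast
    qed simp
  qed
  hence "z \<in> tree_children W le v"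
    unfolding tree_children_def using zS dom by blast
  with z show ?thesis by blast
qed

lemma lca_eq:
  assumes "z \<in> W" "le a z" "le b z" "\<forall>w\<in>W. le a w \<and> le b w \<longrightarrow> le z w"
  shows "lca W le a b = z"
  unfolding lca_def by (rule the_equality) (use assms t_antisym in blast)+

lemma lca:
  assumes "a \<in> W" "b \<in> W"
  shows "lca W le a b \<in> W \<and> le a (lca W le a b) \<and> le b (lca W le a b) \<and>
    (\<forall>w\<in>W. le a w \<and> le b w \<longrightarrow> le (lca W le a b) w)"
proof -
  obtain r where r: "r \<in> W" "\<forall>u\<in>W. le u r" using root_ex by blast
  let ?S = "{w. le a w \<and> le b w}"
  have "r \<in> ?S" using r assms by blast
  from min_anc[of ?S a r, OF _ this] obtain z where z: "z \<in> ?S" "\<forall>w\<in>?S. le z w" by blast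
  have "lca W le a b = z" by (rule lca_eq) (use z dom in auto)
  with z dom show ?thesis by auto
qed

lemma L1:
  assumes "d \<in> tree_children W le v" "le a d" "le a w" "le w v" "w \<noteq> v"
  shows "le w d"
proof -
  have "le d w \<or> le w d" using assms(2,3) chain by blast
  thus ?thesis
  proof
    assume "le d w"
    hence "w = d \<or> w = v" using assms(1,4) dom unfolding tree_children_def by blast
    thus ?thesis using assms(5) \<open>le d w\<close> by blast
  qed
qed

lemma L2:
  assumes "d1 \<in> tree_children W le v" "d2 \<in> tree_children W le v" "le w d1" "le w d2"
  shows "d1 = d2"
proof -
  have "le d1 d2 \<or> le d2 d1" using assms(3,4) chain by blast
  thus ?thesis using assms(1,2) unfolding tree_children_def by blast
qed

end


lemma hub_tree:
  fixes V :: "'a set" and H :: "'a set set" and \<sigma> :: "'a \<Rightarrow> 'c"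
  assumes rb: "is_RBMG V H \<sigma>" and xV: "x \<in> V" and vV: "v \<in> V" "v \<noteq> x"
    and uniq: "\<forall>w\<in>V. w \<noteq> x \<longrightarrow> \<sigma> w \<noteq> \<sigma> x"
  shows "is_RBMG V (H \<union> {{x,w} | w. w \<in> V \<and> w \<noteq> x}) \<sigma>"
proof -
  define L :: "('a + nat) set" where "L = Inl ` V"
  define X :: "'a + nat" where "X = Inl x"
  define \<sigma>' :: "'a + nat \<Rightarrow> 'c" where "\<sigma>' = \<sigma> \<circ> projl"
  from rb obtain W :: "('a + nat) set" and le where
    ph: "phylo_tree L W le" and R: "rbm_edges L W le \<sigma>' = (\<lambda>e. Inl ` e) ` H"
    and sgH: "simple_graph V H" and pcH: "properly_colored V H \<sigma>"
    unfolding is_RBMG_def L_def \<sigma>'_def by blast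
  have rtW: "rooted_tree W le" and lv: "tree_leaves W le = L"
    and deg: "\<forall>u \<in> W - L. u \<noteq> tree_root W le \<longrightarrow> card (tree_children W le u) \<ge> 2"
    using ph unfolding phylo_tree_def by auto
  interpret T: rtree W le by standard (rule rtW)
  have leafD: "l \<in> W \<and> (\<forall>w. le w l \<longrightarrow> w = l)" if "l \<in> L" for l
    using that lv T.dom unfolding tree_leaves_def by blast
  have XL: "X \<in> L" using xV unfolding X_def L_def by blast
  have vL: "Inl v \<in> L" "Inl v \<noteq> X" using vV unfolding X_def L_def by auto
  have leX: "le w X \<Longrightarrow> w = X" for w using leafD[OF XL] by blast
  obtain r where r: "r \<in> W" "\<forall>u\<in>W. le u r" using T.root_ex by blast
  have troot: "tree_root W le = r" using T.root_eq r by blast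
  have Xr: "X \<noteq> r" using leX leafD[OF vL(1)] r vL(2) by metis
  have rL: "r \<notin> L" using leafD r XL Xr by metis
  let ?S = "{w. le X w \<and> w \<noteq> X}"
  have "r \<in> ?S" using r XL leafD Xr by blast
  from T.min_anc[of ?S X r, OF _ this] obtain p where p: "p \<in> ?S" "\<forall>w\<in>?S. le p w" by blast
  have pW: "p \<in> W" and Xp: "le X p" "p \<noteq> X" using p T.dom by auto
  have pL: "p \<notin> L" using leafD Xp by metis
  have Xch: "X \<in> tree_children W le p"
    unfolding tree_children_def using Xp p XL leafD T.t_antisym by blast
  have par: "v' = p" if "X \<in> tree_children W le v'" for v'
  proof -
    have "le X v'" "X \<noteq> v'" using that unfolding tree_children_def by auto
    hence "le p v'" using p by blast
    thus ?thesis using that pW Xp unfolding tree_children_def by blast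
  qed
  have finch: "finite (tree_children W le u)" for u
    using T.fin unfolding tree_children_def by auto
  have chW: "tree_children W le u \<subseteq> W" for u unfolding tree_children_def by auto
  obtain s where s: "s \<in> tree_children W le p" "s \<noteq> X"
  proof (cases "p = r")
    case True
    have "Inl v \<noteq> r" using rL vL by blast
    moreover have "le (Inl v) r" using r leafD vL by blast
    ultimately obtain c where "c \<in> tree_children W le r" "le (Inl v) c" using T.child_above by blast
    moreover have "c \<noteq> X" using leX \<open>le (Inl v) c\<close> vL by blast
    ultimately show ?thesis using that True by blast
  next
    case False
    hence "card (tree_children W le p) \<ge> 2" using deg pW pL troot by blast
    then obtain a b where "a \<in> tree_children W le p" "b \<in> tree_children W le p" "a \<noteq> b"
      using two_elems finch by blast
    thus ?thesis using that by blast
  qed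
  have sW: "s \<in> W" "le s p" "s \<noteq> p" using s unfolding tree_children_def by auto
  define B where "B = (p \<noteq> r \<and> card (tree_children W le p) = 2)"
  have chB: "tree_children W le p = {X, s}" if B
    using card2_eq[OF finch _ Xch s(1)] s(2) that unfolding B_def by metis
  define W' where "W' = (if B then W - {p} else W)"
  define le' where "le' = (\<lambda>u w. u \<in> W' \<and> w \<in> W' \<and> (if u = X then w = X \<or> w = r else le u w))"
  have W'W: "W' \<subseteq> W" unfolding W'_def by auto
  have inW': "u \<in> W' \<longleftrightarrow> u \<in> W \<and> \<not> (B \<and> u = p)" for u unfolding W'_def by auto
  have rW': "r \<in> W'" using inW' r B_def by blast
  have LW': "L \<subseteq> W'" using inW' leafD pL by blast
  have sW': "s \<in> W'" using inW' sW by blast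
  have XW': "X \<in> W'" using LW' XL by blast
  have le'nX: "u \<noteq> X \<Longrightarrow> le' u w \<longleftrightarrow> u \<in> W' \<and> w \<in> W' \<and> le u w" for u w
    unfolding le'_def by auto
  have le'X: "le' X w \<longleftrightarrow> w = X \<or> w = r" for w
    unfolding le'_def using XW' rW' by auto
  have rtW': "rooted_tree W' le'"
  proof -
    have a1: "finite W'" using W'W T.fin finite_subset by blast
    have a2: "\<forall>u \<in> W'. le' u u" unfolding le'_def using W'W T.t_refl by auto
    have a3: "\<forall>u \<in> W'. \<forall>v \<in> W'. le' u v \<and> le' v u \<longrightarrow> u = v"
    proof (intro ballI impI)
      fix u w assume "u \<in> W'" "w \<in> W'" and h: "le' u w \<and> le' w u"
      show "u = w"
      proof (cases "u = X \<or> w = X")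
        case True
        then show ?thesis using h le'X le'nX leX Xr by metis
      next
        case False
        then show ?thesis using h le'nX T.t_antisym by metis
      qed
    qed
    have a4: "\<forall>u \<in> W'. \<forall>v \<in> W'. \<forall>w \<in> W'. le' u v \<and> le' v w \<longrightarrow> le' u w"
    proof (intro ballI impI)
      fix u w y assume m: "u \<in> W'" "w \<in> W'" "y \<in> W'" and h: "le' u w \<and> le' w y"
      show "le' u y"
      proof (cases "u = X")
        case True
        then have "w = X \<or> w = r" using h le'X by blast
        then show ?thesis
        proof
          assume "w = X" thus ?thesis using h True by simp
        next
          assume wr: "w = r"
          hence "le r y" using h le'nX Xr by metis
          hence "y = r" using r T.t_antisym T.dom by blast
          thus ?thesis using True le'X by blast
        qed
      next
        case False
        hence "le u w" using h le'nX by blast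
        hence "w \<noteq> X" using leX False by blast
        hence "le w y" using h le'nX by blast
        thus ?thesis using \<open>le u w\<close> T.t_trans le'nX False m by blast
      qed
    qed
    have a5: "\<forall>u v. le' u v \<longrightarrow> u \<in> W' \<and> v \<in> W'" unfolding le'_def by blast
    have a6: "\<exists>r \<in> W'. \<forall>u \<in> W'. le' u r"
    proof (intro bexI[of _ r] ballI)
      fix u assume "u \<in> W'" thus "le' u r" unfolding le'_def using rW' r W'W by auto
    qed (rule rW')
    have a7: "\<forall>u \<in> W'. \<forall>v \<in> W'. \<forall>w \<in> W'. le' u v \<and> le' u w \<longrightarrow> le' v w \<or> le' w v"
    proof (intro ballI impI)
      fix u w y assume m: "u \<in> W'" "w \<in> W'" "y \<in> W'" and h: "le' u w \<and> le' u y"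
      show "le' w y \<or> le' y w"
      proof (cases "u = X")
        case True
        then have "w = X \<or> w = r" "y = X \<or> y = r" using h le'X by blast+
        then show ?thesis using le'X le'nX Xr rW' T.t_refl r by metis
      next
        case False
        hence "le u w" "le u y" using h le'nX by blast+
        hence "w \<noteq> X" "y \<noteq> X" using leX False by blast+
        thus ?thesis using T.chain[OF \<open>le u w\<close> \<open>le u y\<close>] le'nX m by blast
      qed
    qed
    show ?thesis unfolding rooted_tree_def using a1 a2 a3 a4 a5 a6 a7 by blast
  qed
  interpret T': rtree W' le' by standard (rule rtW')
  have "\<forall>u\<in>W'. le' u r" unfolding le'_def using rW' r W'W by auto
  hence troot': "tree_root W' le' = r" using T'.root_eq rW' by blast
  have Sp: "le p u" if "le X u" "u \<noteq> X" for u using p that by blast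
  have lv': "tree_leaves W' le' = L"
  proof
    show "L \<subseteq> tree_leaves W' le'"
    proof
      fix l assume l: "l \<in> L"
      have "\<forall>w\<in>W'. le' w l \<longrightarrow> w = l"
      proof (intro ballI impI)
        fix w assume "w \<in> W'" "le' w l"
        show "w = l"
        proof (cases "w = X")
          case True
          hence "l = X \<or> l = r" using \<open>le' w l\<close> le'X by blast
          thus ?thesis using True rL l by blast
        next
          case False
          thus ?thesis using \<open>le' w l\<close> le'nX leafD l by blast
        qed
      qed
      thus "l \<in> tree_leaves W' le'" unfolding tree_leaves_def using l LW' by blast
    qed
  next
    show "tree_leaves W' le' \<subseteq> L"
    proof
      fix u assume u: "u \<in> tree_leaves W' le'"
      hence uW': "u \<in> W'" and ul: "\<forall>w\<in>W'. le' w u \<longrightarrow> w = u" unfolding tree_leaves_def by auto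
      show "u \<in> L"
      proof (rule ccontr)
        assume "u \<notin> L"
        have uW: "u \<in> W" using uW' W'W by blast
        then obtain w where w: "w \<in> W" "le w u" "w \<noteq> u" using \<open>u \<notin> L\<close> lv unfolding tree_leaves_def by blast
        have uX: "u \<noteq> X" using XL \<open>u \<notin> L\<close> by blast
        show False
        proof (cases "w \<in> W' \<and> w \<noteq> X")
          case True
          thus False using ul w le'nX uW' by blast
        next
          case False
          hence "w = X \<or> (B \<and> w = p)" using inW' w by blast
          hence "le p u" using Sp w uX by blast
          hence "le s u" using sW T.t_trans by blast
          moreover have "s \<noteq> u" using \<open>le p u\<close> sW T.t_antisym by blast
          ultimately show False using ul sW' uW' le'nX s(2) by blast
        qed
      qed
    qed
  qed
  have deg': "\<forall>u \<in> W' - L. u \<noteq> tree_root W' le' \<longrightarrow> card (tree_children W' le' u) \<ge> 2"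
  proof (intro ballI impI)
    fix u assume u: "u \<in> W' - L" and ur: "u \<noteq> tree_root W' le'"
    have uW: "u \<in> W" "u \<notin> L" "u \<noteq> r" "u \<noteq> X" using u ur troot' W'W XL by auto
    have c2: "card (tree_children W le u) \<ge> 2" using deg uW troot by blast
    have "card (tree_children W le u - {X}) \<ge> 2"
    proof (cases "u = p")
      case True
      hence "\<not> B" using u inW' by blast
      hence "card (tree_children W le u) \<ge> 3" using c2 True uW unfolding B_def by auto
      thus ?thesis using card_Diff_singleton[OF Xch] True by auto
    next
      case False
      hence "X \<notin> tree_children W le u" using par by blast
      thus ?thesis using c2 by simp
    qed
    then obtain d1 d2 where d: "d1 \<in> tree_children W le u - {X}" "d2 \<in> tree_children W le u - {X}" "d1 \<noteq> d2"
      using two_elems[of "tree_children W le u - {X}"] finch by blast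
    have pick: "\<exists>a. a \<in> W' \<and> a \<noteq> X \<and> le a d \<and> le' a u" if dd: "d \<in> tree_children W le u - {X}" for d
    proof -
      have dW: "d \<in> W" "le d u" "d \<noteq> u" "d \<noteq> X" using dd unfolding tree_children_def by auto
      obtain a where a: "a \<in> W'" "a \<noteq> X" "le a d"
      proof (cases "d \<in> W'")
        case True thus ?thesis using that dW T.t_refl by blast
      next
        case False
        hence "d = p" using inW' dW by blast
        thus ?thesis using that sW' s(2) sW by blast
      qed
      have "le a u" using a dW T.t_trans by blast
      thus ?thesis using a le'nX u by blast
    qed
    obtain a1 where a1: "a1 \<in> W'" "a1 \<noteq> X" "le a1 d1" "le' a1 u" using pick d(1) by blast
    obtain a2 where a2: "a2 \<in> W'" "a2 \<noteq> X" "le a2 d2" "le' a2 u" using pick d(2) by blast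
    have a1u: "a1 \<noteq> u"
    proof
      assume "a1 = u" thus False using a1 d(1) T.t_antisym unfolding tree_children_def by blast
    qed
    have a2u: "a2 \<noteq> u"
    proof
      assume "a2 = u" thus False using a2 d(2) T.t_antisym unfolding tree_children_def by blast
    qed
    obtain c1 where c1: "c1 \<in> tree_children W' le' u" "le' a1 c1" using T'.child_above a1 a1u by blast
    obtain c2 where c2': "c2 \<in> tree_children W' le' u" "le' a2 c2" using T'.child_above a2 a2u by blast
    have "c1 \<noteq> c2"
    proof
      assume ceq: "c1 = c2"
      have cc: "c1 \<in> W'" "c1 \<noteq> u" "le' c1 u" using c1 unfolding tree_children_def by auto
      have "c1 \<noteq> X" using c1(2) a1(2) le'nX leX by blast
      hence "le c1 u" using cc le'nX by blast
      have "le a1 c1" "le a2 c1" using c1 c2' ceq a1 a2 le'nX by auto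
      have "le c1 d1" using T.L1[of d1 u a1 c1] d(1) a1 \<open>le a1 c1\<close> \<open>le c1 u\<close> cc by blast
      moreover have "le c1 d2" using T.L1[of d2 u a2 c1] d(2) a2 \<open>le a2 c1\<close> \<open>le c1 u\<close> cc by blast
      ultimately show False using T.L2[of d1 u d2 c1] d by blast
    qed
    moreover have "finite (tree_children W' le' u)" using T'.fin unfolding tree_children_def by auto
    ultimately have "card {c1, c2} \<le> card (tree_children W' le' u)"
      using c1 c2' card_mono by (metis empty_subsetI insert_subset)
    thus "card (tree_children W' le' u) \<ge> 2" using \<open>c1 \<noteq> c2\<close> by simp
  qed
  have ph': "phylo_tree L W' le'" unfolding phylo_tree_def using rtW' lv' deg' by blast
  have LC1: "lca W' le' a b = lca W le a b \<and> lca W le a b \<in> W' \<and> lca W le a b \<noteq> X"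
    if ab: "a \<in> L" "b \<in> L" "a \<noteq> X" "b \<noteq> X" for a b
  proof -
    define z where "z = lca W le a b"
    have aW: "a \<in> W" "b \<in> W" using ab leafD by auto
    have z: "z \<in> W" "le a z" "le b z" "\<forall>w\<in>W. le a w \<and> le b w \<longrightarrow> le z w"
      using T.lca[OF aW] unfolding z_def by auto
    have zX: "z \<noteq> X" using z(2) leX ab(3) by blast
    have zW': "z \<in> W'"
    proof (rule ccontr)
      assume "z \<notin> W'"
      hence Bz: "B" "z = p" using inW' z(1) by auto
      have below: "le c s" if c: "c \<in> L" "c \<noteq> X" "le c p" for c
      proof -
        have "c \<noteq> p" using c pL by blast
        then obtain d where d: "d \<in> tree_children W le p" "le c d" using T.child_above c(3) by blast
        have "d \<noteq> X" using d(2) leX c(2) by blast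
        thus ?thesis using d chB Bz(1) by blast
      qed
      have "le a s" "le b s" using below ab z Bz by auto
      hence "le p s" using z(4) sW Bz by blast
      thus False using sW T.t_antisym by blast
    qed
    have "lca W' le' a b = z"
    proof (rule T'.lca_eq)
      show "z \<in> W'" by (rule zW')
      show "le' a z" "le' b z" using le'nX ab LW' zW' z by auto
      show "\<forall>w\<in>W'. le' a w \<and> le' b w \<longrightarrow> le' z w"
        using le'nX ab z zW' zX W'W by blast
    qed
    thus ?thesis using zW' zX z_def by simp
  qed
  have LC2: "lca W' le' a X = r \<and> lca W' le' X a = r" if a: "a \<in> W'" "a \<noteq> X" for a
  proof -
    have ar: "le' a r" using le'nX a rW' r W'W by blast
    have Xr': "le' X r" using le'X by blast
    have lst: "le' a w \<and> le' X w \<longrightarrow> le' r w" if "w \<in> W'" for w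
      using le'X le'nX leX a(2) rW' r W'W T.t_refl by metis
    show ?thesis using T'.lca_eq[of r a X] T'.lca_eq[of r X a] rW' ar Xr' lst by blast
  qed
  have colX: "\<sigma>' a \<noteq> \<sigma>' X" if "a \<in> L" "a \<noteq> X" for a
    using that uniq unfolding L_def X_def \<sigma>'_def by auto
  have F1: "best_match L W' le' \<sigma>' a b \<longleftrightarrow> best_match L W le \<sigma>' a b"
    if ab: "a \<in> L" "b \<in> L" "a \<noteq> X" "b \<noteq> X" for a b
  proof -
    have eq: "le' (lca W' le' a b) (lca W' le' a b') \<longleftrightarrow> le (lca W le a b) (lca W le a b')"
      if "b' \<in> L" "\<sigma>' b' = \<sigma>' b" for b'
    proof -
      have "b' \<noteq> X" using that colX ab by metis
      thus ?thesis using LC1[OF ab] LC1[OF ab(1) that(1) ab(3)] le'nX by metis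
    qed
    show ?thesis unfolding best_match_def using eq by auto
  qed
  have F2: "best_match L W' le' \<sigma>' a X \<and> best_match L W' le' \<sigma>' X a" if a: "a \<in> L" "a \<noteq> X" for a
  proof -
    have aW': "a \<in> W'" using a LW' by blast
    have e1: "\<forall>b'\<in>L. \<sigma>' b' = \<sigma>' X \<longrightarrow> le' (lca W' le' a X) (lca W' le' a b')"
      using colX LC2[OF aW' a(2)] T'.t_refl rW' by metis
    have e2: "\<forall>b'\<in>L. \<sigma>' b' = \<sigma>' a \<longrightarrow> le' (lca W' le' X a) (lca W' le' X b')"
    proof (intro ballI impI)
      fix b' assume b': "b' \<in> L" "\<sigma>' b' = \<sigma>' a"
      have "b' \<noteq> X" using b' colX a by metis
      hence "lca W' le' X b' = r" using LC2 b' LW' by blast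
      thus "le' (lca W' le' X a) (lca W' le' X b')" using LC2[OF aW' a(2)] T'.t_refl rW' by simp
    qed
    show ?thesis unfolding best_match_def using e1 e2 a XL colX by metis
  qed
  define XE where "XE = {{x,w} | w. w \<in> V \<and> w \<noteq> x}"
  have RB: "rbm_edges L W' le' \<sigma>' = (\<lambda>e. Inl ` e) ` (H \<union> XE)"
  proof
    show "rbm_edges L W' le' \<sigma>' \<subseteq> (\<lambda>e. Inl ` e) ` (H \<union> XE)"
    proof
      fix e assume "e \<in> rbm_edges L W' le' \<sigma>'"
      then obtain a b where e: "e = {a,b}" "best_match L W' le' \<sigma>' a b" "best_match L W' le' \<sigma>' b a"
        unfolding rbm_edges_def by blast
      have ab: "a \<in> L" "b \<in> L" "a \<noteq> b" using e unfolding best_match_def by auto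
      show "e \<in> (\<lambda>e. Inl ` e) ` (H \<union> XE)"
      proof (cases "a = X \<or> b = X")
        case True
        then obtain w where w: "w \<in> V" "w \<noteq> x" "e = {X, Inl w}"
          using ab e(1) unfolding L_def X_def by auto
        hence "{x,w} \<in> XE" unfolding XE_def by blast
        moreover have "e = Inl ` {x,w}" using w unfolding X_def by auto
        ultimately show ?thesis by blast
      next
        case False
        hence "best_match L W le \<sigma>' a b" "best_match L W le \<sigma>' b a" using F1 ab e by auto
        hence "e \<in> rbm_edges L W le \<sigma>'" unfolding rbm_edges_def using e(1) by blast
        thus ?thesis using R by blast
      qed
    qed
  next
    show "(\<lambda>e. Inl ` e) ` (H \<union> XE) \<subseteq> rbm_edges L W' le' \<sigma>'"
    proof
      fix e :: "('a + nat) set" assume "e \<in> (\<lambda>e. Inl ` e) ` (H \<union> XE)"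
      then obtain h where h: "h \<in> H \<union> XE" "e = Inl ` h" by blast
      show "e \<in> rbm_edges L W' le' \<sigma>'"
      proof (cases "h \<in> H")
        case True
        hence "e \<in> rbm_edges L W le \<sigma>'" using R h by blast
        then obtain a b where e: "e = {a,b}" "best_match L W le \<sigma>' a b" "best_match L W le \<sigma>' b a"
          unfolding rbm_edges_def by blast
        have ab: "a \<in> L" "b \<in> L" "a \<noteq> b" using e unfolding best_match_def by auto
        have "best_match L W' le' \<sigma>' a b \<and> best_match L W' le' \<sigma>' b a"
        proof (cases "a = X \<or> b = X")
          case True
          thus ?thesis using F2 ab by auto
        next
          case False
          thus ?thesis using F1 ab e by auto
        qed
        thus ?thesis unfolding rbm_edges_def using e(1) by blast
      next
        case False
        then obtain w where w: "w \<in> V" "w \<noteq> x" "h = {x,w}" using h unfolding XE_def by blast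
        have "e = {X, Inl w}" using w h unfolding X_def by auto
        moreover have "Inl w \<in> L" "Inl w \<noteq> X" using w unfolding L_def X_def by auto
        ultimately show ?thesis using F2 unfolding rbm_edges_def by blast
      qed
    qed
  qed
  have sg: "simple_graph V (H \<union> XE)"
    using sgH xV unfolding simple_graph_def XE_def all_pairs_def by blast
  have pc: "properly_colored V (H \<union> XE) \<sigma>"
    unfolding properly_colored_def
  proof (intro allI impI)
    fix u w assume "{u, w} \<in> H \<union> XE"
    thus "\<sigma> u \<noteq> \<sigma> w"
    proof
      assume "{u,w} \<in> H" thus ?thesis using pcH unfolding properly_colored_def by blast
    next
      assume "{u,w} \<in> XE"
      then obtain y where "y \<in> V" "y \<noteq> x" "{u,w} = {x,y}" unfolding XE_def by blast
      thus ?thesis using uniq doubleton_eq_iff by metis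
    qed
  qed
  show ?thesis unfolding is_RBMG_def XE_def[symmetric]
    using sg pc ph' RB unfolding L_def \<sigma>'_def by blast
qed


lemma fin_all_pairs: "finite V \<Longrightarrow> finite (all_pairs V)"
proof -
  assume "finite V"
  moreover have "all_pairs V \<subseteq> Pow V" unfolding all_pairs_def by auto
  ultimately show ?thesis using finite_subset by blast
qed

lemma hub_n:
  fixes V :: "'a set" and H :: "'a set set" and \<sigma> :: "'a \<Rightarrow> 'c"
  assumes "is_n_RBMG V H \<sigma> n" "x \<in> V" "v \<in> V" "v \<noteq> x"
    and "\<forall>w\<in>V. w \<noteq> x \<longrightarrow> \<sigma> w \<noteq> \<sigma> x"
  shows "is_n_RBMG V (H \<union> {{x,w} | w. w \<in> V \<and> w \<noteq> x}) \<sigma> n"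
  using assms hub_tree[of V H \<sigma> x v] unfolding is_n_RBMG_def by blast

theorem mainTheorem5:
  fixes V :: "'a set" and E F :: "'a set set" and \<sigma> :: "'a \<Rightarrow> 'c" and n :: nat and x :: 'a
  assumes "properly_n_colored V E \<sigma> n"
    and "hub_vertex V E x"
  shows "(optimal_deletion_set V E \<sigma> n F \<longrightarrow> (\<forall>v \<in> V. {x, v} \<notin> F)) \<and>
         (optimal_edit_set V E \<sigma> n F \<longrightarrow> (\<forall>v \<in> V. {x, v} \<notin> F))"
proof -
  define XE where "XE = {{x,w} | w. w \<in> V \<and> w \<noteq> x}"
  have finV: "finite V" and EV: "E \<subseteq> all_pairs V" and pc: "properly_colored V E \<sigma>"
    using assms(1) unfolding properly_n_colored_def simple_graph_def by auto
  have xV: "x \<in> V" and hub: "\<forall>w\<in>V - {x}. {x, w} \<in> E" using assms(2) unfolding hub_vertex_def by auto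
  have XEE: "XE \<subseteq> E" using hub unfolding XE_def by blast
  have uniq: "\<forall>w\<in>V. w \<noteq> x \<longrightarrow> \<sigma> w \<noteq> \<sigma> x"
    using hub pc unfolding properly_colored_def by (metis DiffI singletonD)
  have notsing: "{x, x} \<notin> all_pairs V" unfolding all_pairs_def by (auto simp: doubleton_eq_iff)
  have finAP: "finite (all_pairs V)" using fin_all_pairs finV by blast
  have xvXE: "{x,v} \<in> XE" if "v \<in> V" "v \<noteq> x" for v using that unfolding XE_def by blast
  have part1: "\<forall>v \<in> V. {x, v} \<notin> F" if opt: "optimal_deletion_set V E \<sigma> n F"
  proof (intro ballI notI)
    fix v assume vV: "v \<in> V" and xvF: "{x, v} \<in> F"
    have FE: "F \<subseteq> E" and rb: "is_n_RBMG V (E - F) \<sigma> n"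
      using opt unfolding optimal_deletion_set_def deletion_set_def by auto
    have vx: "v \<noteq> x" using xvF FE EV notsing by blast
    have "is_n_RBMG V ((E - F) \<union> XE) \<sigma> n" using hub_n[OF rb xV vV vx uniq] unfolding XE_def by blast
    moreover have "E - (F - XE) = (E - F) \<union> XE" using XEE by blast
    ultimately have "deletion_set V E \<sigma> n (F - XE)" unfolding deletion_set_def using FE by auto
    hence "card F \<le> card (F - XE)" using opt unfolding optimal_deletion_set_def by blast
    moreover have "card (F - XE) < card F"
      using psubset_card_mono[of F "F - XE"] finite_subset[OF _ finAP] FE EV xvF xvXE[OF vV vx] by blast
    ultimately show False by simp
  qed
  have part2: "\<forall>v \<in> V. {x, v} \<notin> F" if opt: "optimal_edit_set V E \<sigma> n F"
  proof (intro ballI notI)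
    fix v assume vV: "v \<in> V" and xvF: "{x, v} \<in> F"
    have FE: "F \<subseteq> all_pairs V" and rb: "is_n_RBMG V ((E - F) \<union> (F - E)) \<sigma> n"
      using opt unfolding optimal_edit_set_def edit_set_def by auto
    have vx: "v \<noteq> x" using xvF FE notsing by blast
    have "is_n_RBMG V (((E - F) \<union> (F - E)) \<union> XE) \<sigma> n"
      using hub_n[OF rb xV vV vx uniq] unfolding XE_def by blast
    moreover have "(E - (F - XE)) \<union> ((F - XE) - E) = ((E - F) \<union> (F - E)) \<union> XE" using XEE by blast
    ultimately have "edit_set V E \<sigma> n (F - XE)" unfolding edit_set_def using FE by auto
    hence "card F \<le> card (F - XE)" using opt unfolding optimal_edit_set_def by blast
    moreover have "card (F - XE) < card F"
      using psubset_card_mono[of F "F - XE"] finite_subset[OF _ finAP] FE xvF xvXE[OF vV vx] by blast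
    ultimately show False by simp
  qed
  show ?thesis using part1 part2 by blast
qed

end
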